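(* If $\Gamma_G$ is population monotonic, then $G$ has no subgraph isomorphic to the complete graph $K_4$ (equivalently, no induced subgraph isomorphic to $K_4$).
   Context: $G=(V,E;w)$ is a finite simple graph with edge weights $w:E\to\mathbb{R}$, $w_e>0$ for all $e\in E$. The matching game on $G$ is the cooperative game $\Gamma_G=(N,\gamma)$ with player set $N=V$ and, for $S\subseteq N$, $\gamma(S)$ equal to the maximum weight of a matching in the induced subgraph $G[S]$ (so $\gamma(\emptyset)=0$). A population monotonic allocation scheme (PMAS) is a family $(\boldsymbol{x}_S)_{\emptyset\neq S\subseteq N}$ with $\boldsymbol{x}_S=(x_{S,i})_{i\in S}\in\mathbb{R}^S$ such that (efficiency) $\sum_{i\in S}x_{S,i}=\gamma(S)$ for every nonempty $S\subseteq N$, and (monotonicity) $x_{S,i}\le x_{T,i}$ whenever $\emptyset\ne S\subseteq T\subseteq N$ and $i\in S$. $\Gamma_G$ is called population monotonic if it admits a PMAS. *)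

theory Defs
  imports Complex_Main
begin

definition simple_graph :: "'a set \<Rightarrow> 'a set set \<Rightarrow> bool" where
  "simple_graph V E \<longleftrightarrow> finite V \<and> (\<forall>e\<in>E. \<exists>u v. e = {u, v} \<and> u \<noteq> v \<and> u \<in> V \<and> v \<in> V)"

definition matching_in :: "'a set set \<Rightarrow> 'a set \<Rightarrow> 'a set set \<Rightarrow> bool" where
  "matching_in E S M \<longleftrightarrow> M \<subseteq> E \<and> (\<forall>e\<in>M. e \<subseteq> S)
      \<and> (\<forall>e\<in>M. \<forall>f\<in>M. e \<noteq> f \<longrightarrow> e \<inter> f = {})"

definition match_value :: "'a set set \<Rightarrow> ('a set \<Rightarrow> real) \<Rightarrow> 'a set \<Rightarrow> real" where
  "match_value E w S = Max {sum w M | M. matching_in E S M}"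

text \<open>Population monotonic allocation scheme: x S i is the payoff to i in coalition S.\<close>

definition is_PMAS :: "'a set \<Rightarrow> 'a set set \<Rightarrow> ('a set \<Rightarrow> real) \<Rightarrow> ('a set \<Rightarrow> 'a \<Rightarrow> real) \<Rightarrow> bool" where
  "is_PMAS V E w x \<longleftrightarrow>
     (\<forall>S. S \<subseteq> V \<and> S \<noteq> {} \<longrightarrow> (\<Sum>i\<in>S. x S i) = match_value E w S)
   \<and> (\<forall>S T i. S \<noteq> {} \<and> S \<subseteq> T \<and> T \<subseteq> V \<and> i \<in> S \<longrightarrow> x S i \<le> x T i)"

definition population_monotonic :: "'a set \<Rightarrow> 'a set set \<Rightarrow> ('a set \<Rightarrow> real) \<Rightarrow> bool" where
  "population_monotonic V E w \<longleftrightarrow> (\<exists>x. is_PMAS V E w x)"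

end

theory Submission
  imports Defs
begin

lemma mv_le:
  assumes "finite S" "\<And>M. matching_in E S M \<Longrightarrow> sum w M \<le> c"
  shows "match_value E w S \<le> c"
proof -
  have eq: "{sum w M |M. matching_in E S M} = sum w ` {M. matching_in E S M}" by auto
  have "{M. matching_in E S M} \<subseteq> Pow (Pow S)" unfolding matching_in_def by auto
  hence fin: "finite {M. matching_in E S M}" using assms(1) by (meson finite_Pow_iff finite_subset)
  have ne: "matching_in E S {}" unfolding matching_in_def by auto
  show ?thesis unfolding match_value_def eq
    using fin ne assms(2) by (subst Max_le_iff) auto
qed

lemma mv_ge:
  assumes "finite S" "matching_in E S M"
  shows "sum w M \<le> match_value E w S"
proof -
  have eq: "{sum w M |M. matching_in E S M} = sum w ` {M. matching_in E S M}" by auto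
  have "{M. matching_in E S M} \<subseteq> Pow (Pow S)" unfolding matching_in_def by auto
  hence fin: "finite {M. matching_in E S M}" using assms(1) by (meson finite_Pow_iff finite_subset)
  show ?thesis unfolding match_value_def eq
    using fin assms(2) by (intro Max_ge) auto
qed

lemma mv_pair:
  assumes g: "simple_graph V E" and pos: "\<forall>e\<in>E. w e > 0" and e: "{u,v} \<in> E" and uv: "u \<noteq> v"
  shows "match_value E w {u,v} = w {u,v}"
proof (rule antisym)
  show "match_value E w {u, v} \<le> w {u, v}"
  proof (rule mv_le)
    fix M assume m: "matching_in E {u,v} M"
    have "M \<subseteq> {{u,v}}"
    proof
      fix f assume f: "f \<in> M"
      hence "f \<in> E" "f \<subseteq> {u,v}" using m unfolding matching_in_def by auto
      then obtain p q where "f = {p,q}" "p \<noteq> q" using g unfolding simple_graph_def by blast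
      with \<open>f \<subseteq> {u,v}\<close> show "f \<in> {{u,v}}" by auto
    qed
    hence "M = {} \<or> M = {{u,v}}" by auto
    thus "sum w M \<le> w {u,v}" using pos e by auto
  qed auto
next
  have "matching_in E {u,v} {{u,v}}" using e unfolding matching_in_def by auto
  from mv_ge[OF _ this] show "w {u, v} \<le> match_value E w {u, v}" by simp
qed

lemma mv_triple:
  assumes g: "simple_graph V E" and pos: "\<forall>e\<in>E. w e > 0"
    and e: "{i,j} \<in> E" "{i,k} \<in> E" "{j,k} \<in> E" and d: "i \<noteq> j" "i \<noteq> k" "j \<noteq> k"
  shows "match_value E w {i,j,k} \<le> max (w {i,j}) (max (w {i,k}) (w {j,k}))"
proof (rule mv_le)
  fix M assume m: "matching_in E {i,j,k} M"
  have sub: "\<forall>f\<in>M. f \<in> {{i,j},{i,k},{j,k}}"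
  proof
    fix f assume f: "f \<in> M"
    hence "f \<in> E" "f \<subseteq> {i,j,k}" using m unfolding matching_in_def by auto
    then obtain p q where "f = {p,q}" "p \<noteq> q" using g unfolding simple_graph_def by blast
    with \<open>f \<subseteq> {i,j,k}\<close> show "f \<in> {{i,j},{i,k},{j,k}}" by (auto simp: insert_commute)
  qed
  have one: "\<forall>f\<in>M. \<forall>h\<in>M. f = h"
  proof (intro ballI)
    fix f h assume "f \<in> M" "h \<in> M"
    moreover have "f \<noteq> h \<longrightarrow> f \<inter> h = {}" using m \<open>f \<in> M\<close> \<open>h \<in> M\<close> unfolding matching_in_def by auto
    ultimately show "f = h"
    proof (rule_tac ccontr)
      assume "f \<in> M" "h \<in> M" "f \<noteq> h \<longrightarrow> f \<inter> h = {}" "f \<noteq> h"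
      hence emp: "f \<inter> h = {}" by simp
      have "f \<in> {{i,j},{i,k},{j,k}}" "h \<in> {{i,j},{i,k},{j,k}}" using sub \<open>f \<in> M\<close> \<open>h \<in> M\<close> by auto
      thus False using emp \<open>f \<noteq> h\<close> by auto
    qed
  qed
  show "sum w M \<le> max (w {i,j}) (max (w {i,k}) (w {j,k}))"
  proof (cases "M = {}")
    case True thus ?thesis using pos e by (auto simp: max_def less_imp_le)
  next
    case False
    then obtain f where f: "f \<in> M" by auto
    hence "M = {f}" using one by auto
    thus ?thesis using sub f by auto
  qed
qed auto


lemma edge_sub: "simple_graph V E \<Longrightarrow> e \<in> E \<Longrightarrow> e \<subseteq> V"
  unfolding simple_graph_def by force

lemma pmas_eff:
  assumes "is_PMAS V E w x" "S \<subseteq> V" "S \<noteq> {}"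
  shows "(\<Sum>i\<in>S. x S i) = match_value E w S"
proof -
  have h: "\<forall>S. S \<subseteq> V \<and> S \<noteq> {} \<longrightarrow> (\<Sum>i\<in>S. x S i) = match_value E w S"
    using assms(1) unfolding is_PMAS_def by (rule conjunct1)
  show ?thesis using h[rule_format, of S] assms(2,3) by simp
qed

lemma pmas_mono:
  assumes "is_PMAS V E w x" "S \<noteq> {}" "S \<subseteq> T" "T \<subseteq> V" "i \<in> S"
  shows "x S i \<le> x T i"
proof -
  have h: "\<forall>S T i. S \<noteq> {} \<and> S \<subseteq> T \<and> T \<subseteq> V \<and> i \<in> S \<longrightarrow> x S i \<le> x T i"
    using assms(1) unfolding is_PMAS_def by (rule conjunct2)
  show ?thesis using h[rule_format, of S T i] assms(2-5) by simp
qed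

lemma pair_sum:
  assumes g: "simple_graph V E" and pos: "\<forall>e\<in>E. w e > 0" and P: "is_PMAS V E w x"
    and e: "{u,v} \<in> E" and uv: "u \<noteq> v"
  shows "x {u,v} u + x {u,v} v = w {u,v}"
proof -
  have "{u,v} \<subseteq> V" using edge_sub[OF g e] .
  hence "(\<Sum>i\<in>{u,v}. x {u,v} i) = match_value E w {u,v}" using pmas_eff[OF P] by simp
  thus ?thesis using mv_pair[OF g pos e uv] uv by simp
qed

lemma edge_ok:
  assumes g: "simple_graph V E" and pos: "\<forall>e\<in>E. w e > 0" and P: "is_PMAS V E w x"
    and e: "{u,v} \<in> E" and uv: "u \<noteq> v"
  shows "\<not> (w {u,v} \<le> x {u,v} u \<and> w {u,v} \<le> x {u,v} v)"
proof -
  have s: "x {u,v} u + x {u,v} v = w {u,v}" using pair_sum[OF g pos P e uv] .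
  have "w {u,v} > 0" using pos e by blast
  thus ?thesis using s by linarith
qed

lemma tri:
  assumes g: "simple_graph V E" and pos: "\<forall>e\<in>E. w e > 0" and P: "is_PMAS V E w x"
    and e: "{i,j} \<in> E" "{i,k} \<in> E" "{j,k} \<in> E" and d: "i \<noteq> j" "i \<noteq> k" "j \<noteq> k"
  shows "(\<not> w{i,j} \<le> x{i,j} i \<and> \<not> w{i,j} \<le> x{i,j} j \<and> w{i,k} \<le> x{i,k} i \<and> w{j,k} \<le> x{j,k} j) \<or>
(\<not> w{i,k} \<le> x{i,k} i \<and> \<not> w{i,k} \<le> x{i,k} k \<and> w{i,j} \<le> x{i,j} i \<and> w{j,k} \<le> x{j,k} k) \<or>
(\<not> w{j,k} \<le> x{j,k} j \<and> \<not> w{j,k} \<le> x{j,k} k \<and> w{i,j} \<le> x{i,j} j \<and> w{i,k} \<le> x{i,k} k)"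
proof -
  have p1: "x {i,j} i + x {i,j} j = w {i,j}" using pair_sum[OF g pos P e(1) d(1)] .
  have p2: "x {i,k} i + x {i,k} k = w {i,k}" using pair_sum[OF g pos P e(2) d(2)] .
  have p3: "x {j,k} j + x {j,k} k = w {j,k}" using pair_sum[OF g pos P e(3) d(3)] .
  have TV: "{i,j,k} \<subseteq> V" using edge_sub[OF g e(1)] edge_sub[OF g e(2)] by auto
  have "(\<Sum>l\<in>{i,j,k}. x {i,j,k} l) = match_value E w {i,j,k}"
    using pmas_eff[OF P TV] by simp
  hence ts: "x {i,j,k} i + x {i,j,k} j + x {i,j,k} k = match_value E w {i,j,k}"
    using d by simp
  have mv: "match_value E w {i,j,k} \<le> max (w {i,j}) (max (w {i,k}) (w {j,k}))"
    using mv_triple[OF g pos e d] .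
  have mono: "\<And>S l. S \<noteq> {} \<Longrightarrow> S \<subseteq> {i,j,k} \<Longrightarrow> l \<in> S \<Longrightarrow> x S l \<le> x {i,j,k} l"
    using pmas_mono[OF P _ _ TV] by simp
  have m1: "x {i,j} i \<le> x {i,j,k} i" "x {i,j} j \<le> x {i,j,k} j"
       "x {i,k} i \<le> x {i,j,k} i" "x {i,k} k \<le> x {i,j,k} k"
       "x {j,k} j \<le> x {i,j,k} j" "x {j,k} k \<le> x {i,j,k} k"
    by (rule mono; auto)+
  have w: "w {i,j} > 0" "w {i,k} > 0" "w {j,k} > 0" using pos e by auto
  note F = p1 p2 p3 ts m1 w
  consider "match_value E w {i,j,k} \<le> w {i,j}" | "match_value E w {i,j,k} \<le> w {i,k}"
    | "match_value E w {i,j,k} \<le> w {j,k}" using mv by (auto simp: max_def split: if_splits)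
  thus ?thesis
  proof cases
    case 1
    have h0: "\<not> w{i,j} \<le> x{i,j} i" using 1 ts m1(1) m1(5) m1(6) p3 w(3) by linarith
    have h1: "\<not> w{i,j} \<le> x{i,j} j" using 1 ts m1(2) m1(3) m1(4) p2 w(2) by linarith
    have h2: "w{i,k} \<le> x{i,k} i" using 1 ts m1(1) m1(2) p1 m1(4) p2 by linarith
    have h3: "w{j,k} \<le> x{j,k} j" using 1 ts m1(1) m1(2) p1 m1(6) p3 by linarith
    show ?thesis by (rule disjI1) (intro conjI h0 h1 h2 h3)
  next
    case 2
    have h0: "\<not> w{i,k} \<le> x{i,k} i" using 2 ts m1(3) m1(5) m1(6) p3 w(3) by linarith
    have h1: "\<not> w{i,k} \<le> x{i,k} k" using 2 ts m1(4) m1(1) m1(2) p1 w(1) by linarith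
    have h2: "w{i,j} \<le> x{i,j} i" using 2 ts m1(3) m1(4) p2 m1(2) p1 by linarith
    have h3: "w{j,k} \<le> x{j,k} k" using 2 ts m1(3) m1(4) p2 m1(5) p3 by linarith
    show ?thesis by (rule disjI2, rule disjI1) (intro conjI h0 h1 h2 h3)
  next
    case 3
    have h0: "\<not> w{j,k} \<le> x{j,k} j" using 3 ts m1(5) m1(3) m1(4) p2 w(2) by linarith
    have h1: "\<not> w{j,k} \<le> x{j,k} k" using 3 ts m1(6) m1(1) m1(2) p1 w(1) by linarith
    have h2: "w{i,j} \<le> x{i,j} j" using 3 ts m1(5) m1(6) p3 m1(1) p1 by linarith
    have h3: "w{i,k} \<le> x{i,k} k" using 3 ts m1(5) m1(6) p3 m1(3) p2 by linarith
    show ?thesis by (rule disjI2, rule disjI2) (intro conjI h0 h1 h2 h3)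
  qed
qed

lemma comb:
  assumes "(\<not>P1\<and>\<not>P2\<and>Q1\<and>S1) \<or> (\<not>Q1\<and>\<not>Q2\<and>P1\<and>S2) \<or> (\<not>S1\<and>\<not>S2\<and>P2\<and>Q2)"
  "(\<not>P1\<and>\<not>P2\<and>R1\<and>T1) \<or> (\<not>R1\<and>\<not>R2\<and>P1\<and>T2) \<or> (\<not>T1\<and>\<not>T2\<and>P2\<and>R2)"
  "(\<not>Q1\<and>\<not>Q2\<and>R1\<and>U1) \<or> (\<not>R1\<and>\<not>R2\<and>Q1\<and>U2) \<or> (\<not>U1\<and>\<not>U2\<and>Q2\<and>R2)"
  "(\<not>S1\<and>\<not>S2\<and>T1\<and>U1) \<or> (\<not>T1\<and>\<not>T2\<and>S1\<and>U2) \<or> (\<not>U1\<and>\<not>U2\<and>S2\<and>T2)"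
  "\<not>(P1\<and>P2)" "\<not>(Q1\<and>Q2)" "\<not>(R1\<and>R2)" "\<not>(S1\<and>S2)" "\<not>(T1\<and>T2)" "\<not>(U1\<and>U2)"
  shows False using assms by sat

theorem mainTheorem9:
  fixes V :: "'a set" and E :: "'a set set" and w :: "'a set \<Rightarrow> real"
  assumes "simple_graph V E"
    and "\<forall>e\<in>E. w e > 0"
    and "population_monotonic V E w"
  shows "\<not> (\<exists>a b c d. distinct [a, b, c, d]
              \<and> {a, b} \<in> E \<and> {a, c} \<in> E \<and> {a, d} \<in> E
              \<and> {b, c} \<in> E \<and> {b, d} \<in> E \<and> {c, d} \<in> E)"
proof
  assume "\<exists>a b c d. distinct [a, b, c, d]
              \<and> {a, b} \<in> E \<and> {a, c} \<in> E \<and> {a, d} \<in> E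
              \<and> {b, c} \<in> E \<and> {b, d} \<in> E \<and> {c, d} \<in> E"
  then obtain a b c d where d: "distinct [a, b, c, d]" and
    e: "{a, b} \<in> E" "{a, c} \<in> E" "{a, d} \<in> E" "{b, c} \<in> E" "{b, d} \<in> E" "{c, d} \<in> E"
    by blast
  obtain x where P: "is_PMAS V E w x" using assms(3) unfolding population_monotonic_def by blast
  note g = assms(1) and pos = assms(2)
  have n: "a \<noteq> b" "a \<noteq> c" "a \<noteq> d" "b \<noteq> c" "b \<noteq> d" "c \<noteq> d" using d by auto
  note t1 = tri[OF g pos P e(1) e(2) e(4) n(1) n(2) n(4)]
  note t2 = tri[OF g pos P e(1) e(3) e(5) n(1) n(3) n(5)]
  note t3 = tri[OF g pos P e(2) e(3) e(6) n(2) n(3) n(6)]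
  note t4 = tri[OF g pos P e(4) e(5) e(6) n(4) n(5) n(6)]
  note o1 = edge_ok[OF g pos P e(1) n(1)]
  note o2 = edge_ok[OF g pos P e(2) n(2)]
  note o3 = edge_ok[OF g pos P e(3) n(3)]
  note o4 = edge_ok[OF g pos P e(4) n(4)]
  note o5 = edge_ok[OF g pos P e(5) n(5)]
  note o6 = edge_ok[OF g pos P e(6) n(6)]
  show False by (rule comb[OF t1 t2 t3 t4 o1 o2 o3 o4 o5 o6])
qed
end
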